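(* Let $\mathcal{D}$ be a clocked basic action theory and $K\in\mathbb{N}$ at least as large as every natural-number constant mentioned in $\mathcal{D}$. Then Algorithm 1 (described in the context) terminates on input $(\mathcal{D},K)$ and returns the time-abstract transition system $\mathcal{T}_{\mathcal{D}}$, in the sense that for every sequence of states $p$ starting in $[S_0]_{\approx_{\mathcal{D}K}}$, $p$ is a path in the returned transition system iff $p$ is a path in $\mathcal{T}_{\mathcal{D}}$.
   Context: Situation calculus setting: sorts action, situation, object and time (the real numbers); $S_0$ initial situation; $\mathit{do}(a,s)$ the successor situation; $\mathcal{S}$ is the set of ground situations. Fluents are relation or function symbols with last argument a situation and other arguments objects; finitely many fluents, a finite set $\mathcal{A}$ of action types (action type $A$ has $|A|$ object arguments), finite set $\mathcal{O}$ of object constants (unique names, domain closure). A formula is uniform in $s$ if it mentions no situation term other than $s$ and does not mention $\mathit{Poss}$. A BAT is $\mathcal{D} = \mathcal{D}_0 \cup \mathcal{D}_{poss} \cup \mathcal{D}_{ssa} \cup \mathcal{D}_{ca} \cup \mathcal{D}_{co} \cup \Sigma$ (initial description uniform in $S_0$ with complete information, precondition axioms $\mathit{Poss}(A(\vec x),s)\equiv\phi_A(\vec x,s)$, successor state axioms, domain closure and unique name axioms for actions and objects, foundational axioms including $\sqsubset$); write $\mathcal{D}_c=\mathcal{D}_{ca}\cup\mathcal{D}_{co}$. $\mathit{Exec}(s)$ abbreviates $\forall a,s'(\mathit{do}(a,s')\sqsubseteq s\supset\mathit{Poss}(a,s'))$. Clock comparison: $f(\vec x,s)\bowtie v$ or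 $v\bowtie v'$ ($f$ functional fluent, $v,v'\in\mathbb{N}$, $\bowtie\in\{<,\leq,=,\geq,>\}$). Clocked formula: every atomic subformula mentioning a time term is a clock comparison; time-independent: no time term. A BAT is clocked if there is a distinguished action type $\mathit{wait}(t)$ (others have no time argument) and: functional fluents take time values and are $0$ at $S_0$; each functional fluent has successor state axiom $f(\vec o,\mathit{do}(a,s))=y \equiv \exists t\,(a=\mathit{wait}(t)\wedge y=f(\vec o,s)+t) \vee (\neg\exists t\, a=\mathit{wait}(t)) \wedge (\phi_f(\vec o,a,s)\wedge y=0 \vee \neg\phi_f(\vec o,a,s)\wedge y=f(\vec o,s))$ with $\phi_f$ time-independent, uniform in $s$; relational successor state axioms and precondition axioms have clocked right-hand sides uniform in $s$; $\mathit{Poss}(\mathit{wait}(t),s)\equiv\top$. Functional fluents are clocks; $\mathcal{C}$ the ground situation-suppressed clock terms; $\nu_\sigma(\omega)=\tau$ iff $\mathcal{D}\models\omega[\sigma]=\tau$; for $\tau\geq0$, $\nu+\tau$ is the valuation $\omega\mapsto\nu(\omega)+\tau$. For $u,v\geq0$: $u\sim_K v$ iff both $>K$, or both $\leq K$ with equal floors and equal ceilings; $\mathrm{fract}(v)=v-\lfloor v\rfloor$ if $v\leq K$, else $0$. Valuations satisfy $\nu\cong_K\nu'$ iff $\nu(\omega)\sim_K\nu'(\omega)$ for all $\omega$ and $\mathrm{fract}(\nu(\omega))\leq\mathrm{fract}(\nu(\omega'))$ iff $\mathrm{fract}(\nu'(\omega))\leq\mathrm{fract}(\nu'(\omega'))$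 for all $\omega,\omega'$. $\sigma_1\approx_{\mathcal{D}K}\sigma_2$ iff they entail the same ground relational fluent atoms and $\nu_{\sigma_1}\cong_K\nu_{\sigma_2}$; $[\sigma]_{\approx_{\mathcal{D}K}}$ is the class of $\sigma$. The time-abstract transition system $\mathcal{T}_{\mathcal{D}}$ has states among $\mathcal{S}/\approx_{\mathcal{D}K}$, initial state $[S_0]_{\approx_{\mathcal{D}K}}$, and transitions $[\sigma]\rightarrow[\sigma']$ whenever $\sigma'=\mathit{do}(\alpha,\sigma)$ for a ground action $\alpha$ and $\mathcal{D}\models\mathit{Exec}(\sigma')$. $\mathcal{R}$ denotes the regression operator, which transforms a formula about a situation $\mathit{do}([\alpha_1;\dots;\alpha_n],S_0)$ into an equivalent formula uniform in $S_0$ by repeatedly replacing $\mathit{Poss}$ atoms and fluent atoms by the right-hand sides of the corresponding axioms (a clock comparison $f(\vec\rho,\mathit{do}(\mathit{wait}(t),\sigma))\bowtie r$ becomes $f(\vec\rho,\sigma)\bowtie r-t$). $\mathrm{TSuccs}(\nu,K)$ is a computable finite set of nonnegative reals such that for every $\tau\in\mathbb{R}_{\geq0}$ there is $\tau'\in\mathrm{TSuccs}(\nu,K)$ with $\nu+\tau\cong_K\nu+\tau'$. Algorithm 1: set $\mathit{Open}:=\{S_0\}$, $V:=\{[S_0]_{\approx_{\mathcal{D}K}}\}$, $E:=\emptyset$. While $\mathit{Open}\neq\emptyset$: remove some $\sigma$ from $\mathit{Open}$; let $\mathit{Acts}:=\{A(\vec\rho)\mid A\in\mathcal{A}\setminus\{\mathit{wait}\},\vec\rho\in\mathcal{O}^{|A|}\}\cup\{\mathit{wait}(\tau)\mid\tau\in\mathrm{TSuccs}(\nu_\sigma,K)\}$;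 for each $\alpha\in\mathit{Acts}$ with $\mathcal{D}_0\cup\mathcal{D}_c\models\mathcal{R}[\mathit{Poss}(\alpha,\sigma)]$: if $[\mathit{do}(\alpha,\sigma)]_{\approx_{\mathcal{D}K}}\notin V$, add it to $V$ and add $\mathit{do}(\alpha,\sigma)$ to $\mathit{Open}$; in any case add $([\sigma]_{\approx_{\mathcal{D}K}},[\mathit{do}(\alpha,\sigma)]_{\approx_{\mathcal{D}K}})$ to $E$. Finally return $(V,[S_0]_{\approx_{\mathcal{D}K}},E)$. *)

theory Defs
  imports Complex_Main
begin

section \<open>Syntax of clocked formulas (situation-suppressed, uniform in s)\<close>

datatype 'o trm = TVar nat | TConst 'o

datatype cmp = CLt | CLe | CEq | CGe | CGt

datatype ('a, 'o) gact = Act 'a "'o list" | Wait real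

text \<open>Formulas. FAct A ts is the atom  a = A(ts)  for the distinguished action variable a
  of a successor state axiom; FClk is a clock comparison f(ts,s) op n; FNat is n op m.\<close>
datatype ('o, 'a, 'r, 'c) fm =
    FTrue
  | FRel 'r "'o trm list"
  | FEqO "'o trm" "'o trm"
  | FAct 'a "'o trm list"
  | FClk 'c "'o trm list" cmp nat
  | FNat nat cmp nat
  | FNot "('o, 'a, 'r, 'c) fm"
  | FAnd "('o, 'a, 'r, 'c) fm" "('o, 'a, 'r, 'c) fm"
  | FEx nat "('o, 'a, 'r, 'c) fm"

fun tval :: "(nat \<Rightarrow> 'o) \<Rightarrow> 'o trm \<Rightarrow> 'o" where
  "tval e (TVar i) = e i"
| "tval e (TConst c) = c"

fun cmpr :: "cmp \<Rightarrow> real \<Rightarrow> real \<Rightarrow> bool" where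
  "cmpr CLt x y = (x < y)"
| "cmpr CLe x y = (x \<le> y)"
| "cmpr CEq x y = (x = y)"
| "cmpr CGe x y = (x \<ge> y)"
| "cmpr CGt x y = (x > y)"

text \<open>Object quantifiers range over all objects (domain closure: the objects are UNIV).\<close>
fun holds :: "('r \<Rightarrow> 'o list \<Rightarrow> bool) \<Rightarrow> ('c \<Rightarrow> 'o list \<Rightarrow> real) \<Rightarrow> ('a, 'o) gact
              \<Rightarrow> (nat \<Rightarrow> 'o) \<Rightarrow> ('o, 'a, 'r, 'c) fm \<Rightarrow> bool" where
  "holds R Cl a e FTrue = True"
| "holds R Cl a e (FRel r ts) = R r (map (tval e) ts)"
| "holds R Cl a e (FEqO t u) = (tval e t = tval e u)"
| "holds R Cl a e (FAct A ts) = (a = Act A (map (tval e) ts))"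
| "holds R Cl a e (FClk c ts op n) = cmpr op (Cl c (map (tval e) ts)) (real n)"
| "holds R Cl a e (FNat m op n) = cmpr op (real m) (real n)"
| "holds R Cl a e (FNot \<phi>) = (\<not> holds R Cl a e \<phi>)"
| "holds R Cl a e (FAnd \<phi> \<psi>) = (holds R Cl a e \<phi> \<and> holds R Cl a e \<psi>)"
| "holds R Cl a e (FEx x \<phi>) = (\<exists>d. holds R Cl a (e(x := d)) \<phi>)"

fun tfv :: "'o trm \<Rightarrow> nat set" where
  "tfv (TVar i) = {i}"
| "tfv (TConst c) = {}"

fun fv :: "('o, 'a, 'r, 'c) fm \<Rightarrow> nat set" where
  "fv FTrue = {}"
| "fv (FRel r ts) = (\<Union>t\<in>set ts. tfv t)"
| "fv (FEqO t u) = tfv t \<union> tfv u"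
| "fv (FAct A ts) = (\<Union>t\<in>set ts. tfv t)"
| "fv (FClk c ts op n) = (\<Union>t\<in>set ts. tfv t)"
| "fv (FNat m op n) = {}"
| "fv (FNot \<phi>) = fv \<phi>"
| "fv (FAnd \<phi> \<psi>) = fv \<phi> \<union> fv \<psi>"
| "fv (FEx x \<phi>) = fv \<phi> - {x}"

fun nconsts :: "('o, 'a, 'r, 'c) fm \<Rightarrow> nat set" where
  "nconsts (FClk c ts op n) = {n}"
| "nconsts (FNat m op n) = {m, n}"
| "nconsts (FNot \<phi>) = nconsts \<phi>"
| "nconsts (FAnd \<phi> \<psi>) = nconsts \<phi> \<union> nconsts \<psi>"
| "nconsts (FEx x \<phi>) = nconsts \<phi>"
| "nconsts _ = {}"

fun time_indep :: "('o, 'a, 'r, 'c) fm \<Rightarrow> bool" where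
  "time_indep (FClk c ts op n) = False"
| "time_indep (FNat m op n) = False"
| "time_indep (FNot \<phi>) = time_indep \<phi>"
| "time_indep (FAnd \<phi> \<psi>) = (time_indep \<phi> \<and> time_indep \<psi>)"
| "time_indep (FEx x \<phi>) = time_indep \<phi>"
| "time_indep _ = True"

fun act_free :: "('o, 'a, 'r, 'c) fm \<Rightarrow> bool" where
  "act_free (FAct A ts) = False"
| "act_free (FNot \<phi>) = act_free \<phi>"
| "act_free (FAnd \<phi> \<psi>) = (act_free \<phi> \<and> act_free \<psi>)"
| "act_free (FEx x \<phi>) = act_free \<phi>"
| "act_free _ = True"

section \<open>Clocked basic action theories\<close>

text \<open>A clocked BAT over a finite object domain 'o, finite non-wait action types 'a,
  finitely many relational fluents 'r and clocks (functional fluents) 'c.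
  init_rel is the (complete) initial description of the relational fluents; all clocks are 0
  in S0. poss_fm A is the right-hand side of the precondition axiom of A (free variables
  0..|A|-1 are the action arguments); ssa_rel R is the right-hand side of the successor state
  axiom of R (free variables 0..|R|-1 the fluent arguments, plus the action variable);
  reset_fm f is the condition phi_f of the successor state axiom of clock f.
  Poss(wait(t),s) is always true and clocks advance by t under wait(t).\<close>
record ('o, 'a, 'r, 'c) bat =
  act_ar :: "'a \<Rightarrow> nat"
  rel_ar :: "'r \<Rightarrow> nat"
  clk_ar :: "'c \<Rightarrow> nat"
  init_rel :: "'r \<Rightarrow> 'o list \<Rightarrow> bool"
  poss_fm :: "'a \<Rightarrow> ('o, 'a, 'r, 'c) fm"
  ssa_rel :: "'r \<Rightarrow> ('o, 'a, 'r, 'c) fm"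
  reset_fm :: "'c \<Rightarrow> ('o, 'a, 'r, 'c) fm"

fun wf_fm :: "('o, 'a, 'r, 'c, 'z) bat_scheme \<Rightarrow> ('o, 'a, 'r, 'c) fm \<Rightarrow> bool" where
  "wf_fm B (FRel r ts) = (length ts = rel_ar B r)"
| "wf_fm B (FAct A ts) = (length ts = act_ar B A)"
| "wf_fm B (FClk c ts op n) = (length ts = clk_ar B c)"
| "wf_fm B (FNot \<phi>) = wf_fm B \<phi>"
| "wf_fm B (FAnd \<phi> \<psi>) = (wf_fm B \<phi> \<and> wf_fm B \<psi>)"
| "wf_fm B (FEx x \<phi>) = wf_fm B \<phi>"
| "wf_fm B _ = True"

definition clocked_bat :: "('o, 'a, 'r, 'c) bat \<Rightarrow> bool" where
  "clocked_bat B \<longleftrightarrow>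
     (\<forall>A. wf_fm B (poss_fm B A) \<and> act_free (poss_fm B A) \<and> fv (poss_fm B A) \<subseteq> {..<act_ar B A})
   \<and> (\<forall>r. wf_fm B (ssa_rel B r) \<and> fv (ssa_rel B r) \<subseteq> {..<rel_ar B r})
   \<and> (\<forall>c. wf_fm B (reset_fm B c) \<and> time_indep (reset_fm B c) \<and> fv (reset_fm B c) \<subseteq> {..<clk_ar B c})"

definition consts_bounded :: "('o, 'a, 'r, 'c) bat \<Rightarrow> nat \<Rightarrow> bool" where
  "consts_bounded B K \<longleftrightarrow>
     (\<forall>A. \<forall>n\<in>nconsts (poss_fm B A). n \<le> K)
   \<and> (\<forall>r. \<forall>n\<in>nconsts (ssa_rel B r). n \<le> K)
   \<and> (\<forall>c. \<forall>n\<in>nconsts (reset_fm B c). n \<le> K)"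

section \<open>Situations and their (unique) semantics\<close>

text \<open>A situation is the list of its actions, most recent first: S0 = [], do(a,s) = a # s.\<close>
type_synonym ('a, 'o) sit = "('a, 'o) gact list"

fun legal :: "('o, 'a, 'r, 'c) bat \<Rightarrow> ('a, 'o) gact \<Rightarrow> bool" where
  "legal B (Act A os) = (length os = act_ar B A)"
| "legal B (Wait t) = (t \<ge> 0)"

definition gsit :: "('o, 'a, 'r, 'c) bat \<Rightarrow> ('a, 'o) sit \<Rightarrow> bool" where
  "gsit B \<sigma> \<longleftrightarrow> (\<forall>\<alpha>\<in>set \<sigma>. legal B \<alpha>)"

fun st :: "('o, 'a, 'r, 'c) bat \<Rightarrow> ('a, 'o) sit
           \<Rightarrow> ('r \<Rightarrow> 'o list \<Rightarrow> bool) \<times> ('c \<Rightarrow> 'o list \<Rightarrow> real)" where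
  "st B [] = (init_rel B, (\<lambda>c os. 0))"
| "st B (\<alpha> # \<sigma>) =
     (let R = fst (st B \<sigma>); Cl = snd (st B \<sigma>) in
       ((\<lambda>r os. holds R Cl \<alpha> (nth os) (ssa_rel B r)),
        (\<lambda>c os. case \<alpha> of
                   Wait t \<Rightarrow> Cl c os + t
                 | Act A xs \<Rightarrow> (if holds R Cl \<alpha> (nth os) (reset_fm B c) then 0 else Cl c os))))"

fun poss :: "('o, 'a, 'r, 'c) bat \<Rightarrow> ('a, 'o) gact \<Rightarrow> ('a, 'o) sit \<Rightarrow> bool" where
  "poss B (Wait t) \<sigma> = True"
| "poss B (Act A os) \<sigma> = holds (fst (st B \<sigma>)) (snd (st B \<sigma>)) (Act A os) (nth os) (poss_fm B A)"

definition exec :: "('o, 'a, 'r, 'c) bat \<Rightarrow> ('a, 'o) sit \<Rightarrow> bool" where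
  "exec B \<sigma> \<longleftrightarrow> (\<forall>i < length \<sigma>. poss B (\<sigma> ! i) (drop (Suc i) \<sigma>))"

section \<open>Clock valuations and region equivalence\<close>

definition clk_terms :: "('o, 'a, 'r, 'c) bat \<Rightarrow> ('c \<times> 'o list) set" where
  "clk_terms B = {(c, os). length os = clk_ar B c}"

definition nu :: "('o, 'a, 'r, 'c) bat \<Rightarrow> ('a, 'o) sit \<Rightarrow> ('c \<times> 'o list) \<Rightarrow> real" where
  "nu B \<sigma> = (\<lambda>(c, os). snd (st B \<sigma>) c os)"

definition simK :: "nat \<Rightarrow> real \<Rightarrow> real \<Rightarrow> bool" where
  "simK K u v \<longleftrightarrow> (u > real K \<and> v > real K)
     \<or> (u \<le> real K \<and> v \<le> real K \<and> \<lfloor>u\<rfloor> = \<lfloor>v\<rfloor> \<and> \<lceil>u\<rceil> = \<lceil>v\<rceil>)"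

definition fractK :: "nat \<Rightarrow> real \<Rightarrow> real" where
  "fractK K v = (if v \<le> real K then v - of_int \<lfloor>v\<rfloor> else 0)"

definition cong_val :: "('o, 'a, 'r, 'c) bat \<Rightarrow> nat \<Rightarrow> ('c \<times> 'o list \<Rightarrow> real)
                        \<Rightarrow> ('c \<times> 'o list \<Rightarrow> real) \<Rightarrow> bool" where
  "cong_val B K \<nu> \<nu>' \<longleftrightarrow>
     (\<forall>\<omega>\<in>clk_terms B. simK K (\<nu> \<omega>) (\<nu>' \<omega>))
   \<and> (\<forall>\<omega>\<in>clk_terms B. \<forall>\<omega>'\<in>clk_terms B.
        (fractK K (\<nu> \<omega>) \<le> fractK K (\<nu> \<omega>')) \<longleftrightarrow> (fractK K (\<nu>' \<omega>) \<le> fractK K (\<nu>' \<omega>')))"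

definition approx :: "('o, 'a, 'r, 'c) bat \<Rightarrow> nat \<Rightarrow> ('a, 'o) sit \<Rightarrow> ('a, 'o) sit \<Rightarrow> bool" where
  "approx B K \<sigma>1 \<sigma>2 \<longleftrightarrow>
     (\<forall>r os. length os = rel_ar B r \<longrightarrow> fst (st B \<sigma>1) r os = fst (st B \<sigma>2) r os)
   \<and> cong_val B K (nu B \<sigma>1) (nu B \<sigma>2)"

definition cls :: "('o, 'a, 'r, 'c) bat \<Rightarrow> nat \<Rightarrow> ('a, 'o) sit \<Rightarrow> ('a, 'o) sit set" where
  "cls B K \<sigma> = {\<sigma>'. gsit B \<sigma>' \<and> approx B K \<sigma>' \<sigma>}"

definition td_trans :: "('o, 'a, 'r, 'c) bat \<Rightarrow> nat \<Rightarrow> ('a, 'o) sit set \<Rightarrow> ('a, 'o) sit set \<Rightarrow> bool" where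
  "td_trans B K X Y \<longleftrightarrow>
     (\<exists>\<sigma> \<alpha>. gsit B (\<alpha> # \<sigma>) \<and> exec B (\<alpha> # \<sigma>) \<and> X = cls B K \<sigma> \<and> Y = cls B K (\<alpha> # \<sigma>))"

text \<open>Admissible TSuccs functions: finite sets of nonnegative reals representing all
  time successors up to region equivalence (for nonnegative valuations).\<close>
definition tsuccs_ok :: "('o, 'a, 'r, 'c) bat
                         \<Rightarrow> (('c \<times> 'o list \<Rightarrow> real) \<Rightarrow> nat \<Rightarrow> real set) \<Rightarrow> bool" where
  "tsuccs_ok B ts \<longleftrightarrow>
     (\<forall>\<nu> K. (\<forall>\<omega>\<in>clk_terms B. \<nu> \<omega> \<ge> 0) \<longrightarrow>
        finite (ts \<nu> K) \<and> (\<forall>\<tau>\<in>ts \<nu> K. \<tau> \<ge> 0)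
        \<and> (\<forall>\<tau>::real. \<tau> \<ge> 0 \<longrightarrow>
              (\<exists>\<tau>'\<in>ts \<nu> K. cong_val B K (\<lambda>\<omega>. \<nu> \<omega> + \<tau>) (\<lambda>\<omega>. \<nu> \<omega> + \<tau>'))))"

section \<open>Algorithm 1 as a (nondeterministic) small-step transition relation\<close>

text \<open>Algorithm state: (Open, V, E, current), where current = Some (sigma, remaining Acts)
  while the for-loop over Acts for the removed situation sigma is running.\<close>
type_synonym ('a, 'o) alg_state =
  "('a, 'o) sit set \<times> ('a, 'o) sit set set \<times> (('a, 'o) sit set \<times> ('a, 'o) sit set) set
   \<times> (('a, 'o) sit \<times> ('a, 'o) gact set) option"

definition acts :: "('o, 'a, 'r, 'c) bat \<Rightarrow> nat \<Rightarrow> (('c \<times> 'o list \<Rightarrow> real) \<Rightarrow> nat \<Rightarrow> real set)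
                    \<Rightarrow> ('a, 'o) sit \<Rightarrow> ('a, 'o) gact set" where
  "acts B K ts \<sigma> = {Act A os | A os. length os = act_ar B A} \<union> Wait ` ts (nu B \<sigma>) K"

definition alg_init :: "('o, 'a, 'r, 'c) bat \<Rightarrow> nat \<Rightarrow> ('a, 'o) alg_state" where
  "alg_init B K = ({[]}, {cls B K []}, {}, None)"

inductive alg_step :: "('o, 'a, 'r, 'c) bat \<Rightarrow> nat \<Rightarrow> (('c \<times> 'o list \<Rightarrow> real) \<Rightarrow> nat \<Rightarrow> real set)
                       \<Rightarrow> ('a, 'o) alg_state \<Rightarrow> ('a, 'o) alg_state \<Rightarrow> bool"
  for B K ts where
  pick: "\<sigma> \<in> Op \<Longrightarrow> alg_step B K ts (Op, V, E, None) (Op - {\<sigma>}, V, E, Some (\<sigma>, acts B K ts \<sigma>))"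
| act_poss: "\<alpha> \<in> As \<Longrightarrow> poss B \<alpha> \<sigma> \<Longrightarrow>
    alg_step B K ts (Op, V, E, Some (\<sigma>, As))
      (if cls B K (\<alpha> # \<sigma>) \<notin> V then Op \<union> {\<alpha> # \<sigma>} else Op,
       V \<union> {cls B K (\<alpha> # \<sigma>)},
       E \<union> {(cls B K \<sigma>, cls B K (\<alpha> # \<sigma>))},
       Some (\<sigma>, As - {\<alpha>}))"
| act_not_poss: "\<alpha> \<in> As \<Longrightarrow> \<not> poss B \<alpha> \<sigma> \<Longrightarrow>
    alg_step B K ts (Op, V, E, Some (\<sigma>, As)) (Op, V, E, Some (\<sigma>, As - {\<alpha>}))"
| loop_done: "alg_step B K ts (Op, V, E, Some (\<sigma>, {})) (Op, V, E, None)"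

definition alg_final :: "('a, 'o) alg_state \<Rightarrow> bool" where
  "alg_final s \<longleftrightarrow> (case s of (Op, V, E, cur) \<Rightarrow> Op = {} \<and> cur = None)"

definition alg_edges :: "('a, 'o) alg_state \<Rightarrow> (('a, 'o) sit set \<times> ('a, 'o) sit set) set" where
  "alg_edges s = (case s of (Op, V, E, cur) \<Rightarrow> E)"

end

theory Submission
  imports Defs
begin


definition cvS :: "'w set \<Rightarrow> nat \<Rightarrow> ('w \<Rightarrow> real) \<Rightarrow> ('w \<Rightarrow> real) \<Rightarrow> bool" where
 "cvS C K x y \<longleftrightarrow> (\<forall>\<omega>\<in>C. simK K (x \<omega>) (y \<omega>)) \<and> (\<forall>\<omega>\<in>C. \<forall>\<omega>'\<in>C.
     (fractK K (x \<omega>) \<le> fractK K (x \<omega>')) \<longleftrightarrow> (fractK K (y \<omega>) \<le> fractK K (y \<omega>')))"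

lemma cong_val_cvS: "cong_val B K = cvS (clk_terms B) K"
  by (auto simp: fun_eq_iff cong_val_def cvS_def)

lemma fractK_ge0: "0 \<le> fractK K v"
  by (simp add: fractK_def)
lemma fractK_lt1: "fractK K v < 1"
  by (simp add: fractK_def) linarith

lemma int_iff_ceil: "((u::real) = of_int \<lfloor>u\<rfloor>) \<longleftrightarrow> \<lceil>u\<rceil> = \<lfloor>u\<rfloor>"
proof
  assume "u = of_int \<lfloor>u\<rfloor>" then show "\<lceil>u\<rceil> = \<lfloor>u\<rfloor>" by (metis ceiling_of_int)
next
  assume h: "\<lceil>u\<rceil> = \<lfloor>u\<rfloor>"
  have "of_int \<lfloor>u\<rfloor> \<le> u" by (rule of_int_floor_le)
  moreover have "u \<le> of_int \<lceil>u\<rceil>" by (rule le_of_int_ceiling)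
  ultimately show "u = of_int \<lfloor>u\<rfloor>" using h by linarith
qed

lemma simK_fract0: "simK K u v \<Longrightarrow> (fractK K u = 0 \<longleftrightarrow> fractK K v = 0)"
  unfolding simK_def fractK_def
  using int_iff_ceil[of u] int_iff_ceil[of v] by auto

lemma simK_cmpr: assumes "simK K u v" "n \<le> K"
  shows "cmpr op u (real n) = cmpr op v (real n)"
proof -
  { assume g: "u > real K" "v > real K"
    then have "u > real n" "v > real n" using assms(2) by linarith+
    then have ?thesis by (cases op) auto }
  moreover
  { assume g: "\<lfloor>u\<rfloor> = \<lfloor>v\<rfloor>" "\<lceil>u\<rceil> = \<lceil>v\<rceil>"
    have l: "u < real n \<longleftrightarrow> v < real n"
      using g floor_less_iff[of u "int n"] floor_less_iff[of v "int n"] by simp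
    have e: "u \<le> real n \<longleftrightarrow> v \<le> real n"
      using g ceiling_le_iff[of u "int n"] ceiling_le_iff[of v "int n"] by simp
    have ?thesis using l e by (cases op) auto }
  ultimately show ?thesis using assms(1) unfolding simK_def by blast
qed

lemma simK_refl: "simK K u u" by (auto simp: simK_def)
lemma simK_sym: "simK K u v \<Longrightarrow> simK K v u" by (auto simp: simK_def)
lemma simK_trans: "simK K u v \<Longrightarrow> simK K v w \<Longrightarrow> simK K u w" by (auto simp: simK_def)

lemma cvS_refl: "cvS C K x x" by (auto simp: cvS_def simK_refl)
lemma cvS_sym: "cvS C K x y \<Longrightarrow> cvS C K y x" by (auto simp: cvS_def simK_sym)
lemma cvS_trans: "cvS C K x y \<Longrightarrow> cvS C K y z \<Longrightarrow> cvS C K x z"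
  unfolding cvS_def by (meson simK_trans)

lemma fractK_shift:
  assumes "0 < d" "d < 1"
  shows "fractK K (u+d) = (if u + d > real K \<or> fractK K u = 1-d then 0
            else if fractK K u < 1-d then fractK K u + d else fractK K u + d - 1)"
proof (cases "u > real K")
  case True then show ?thesis using assms by (simp add: fractK_def)
next
  case False
  note F = False
  show ?thesis
  proof (cases "u + d > real K")
    case True then show ?thesis by (simp add: fractK_def)
  next
    case False
    let ?n = "\<lfloor>u\<rfloor>"
    have A: "fractK K u = u - ?n" using F by (simp add: fractK_def)
    have k: "fractK K (u+d) = u + d - \<lfloor>u+d\<rfloor>" using False by (simp add: fractK_def)
    have b: "of_int ?n \<le> u" "u < of_int ?n + 1" by linarith+
    consider "u - ?n < 1 - d" | "u - ?n = 1 - d" | "u - ?n > 1 - d" by linarith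
    then show ?thesis
    proof cases
      case 1
      then have "\<lfloor>u+d\<rfloor> = ?n" by (intro floor_unique) (use b assms 1 in linarith)+
      then show ?thesis using 1 A k False by simp
    next
      case 2
      then have "u + d = of_int (?n + 1)" by simp
      then have "\<lfloor>u+d\<rfloor> = ?n + 1" by (metis floor_of_int)
      then show ?thesis using 2 A k False by simp
    next
      case 3
      then have "\<lfloor>u+d\<rfloor> = ?n + 1" by (intro floor_unique) (use b assms 3 in \<open>simp; linarith\<close>)+
      then show ?thesis using 3 A k False by simp
    qed
  qed
qed

lemma simK_shift:
  assumes "simK K u v" "0<d" "d<1" "0<d'" "d'<1"
   "fractK K u < 1-d \<longleftrightarrow> fractK K v < 1-d'" "fractK K u = 1-d \<longleftrightarrow> fractK K v = 1-d'"
  shows "simK K (u+d) (v+d') \<and> (u+d > real K \<longleftrightarrow> v+d' > real K)"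
proof (cases "u > real K \<and> v > real K")
  case True then show ?thesis using assms by (simp add: simK_def)
next
  case False
  then have g: "u \<le> K" "v \<le> K" "\<lfloor>u\<rfloor> = \<lfloor>v\<rfloor>" "\<lceil>u\<rceil> = \<lceil>v\<rceil>"
    using assms(1) unfolding simK_def by auto
  define n where "n = \<lfloor>u\<rfloor>"
  have A: "fractK K u = u - n" "fractK K v = v - n" using g by (simp_all add: fractK_def n_def)
  have b: "of_int n \<le> u" "u < of_int n + 1" "of_int n \<le> v" "v < of_int n + 1"
    unfolding n_def using g by linarith+
  consider "u - n < 1 - d" | "u - n = 1 - d" | "u - n > 1 - d" by linarith
  then show ?thesis
  proof cases
    case 1
    then have 2: "v - n < 1 - d'" using assms(6) A by simp
    have f: "\<lfloor>u+d\<rfloor> = n" "\<lfloor>v+d'\<rfloor> = n" using b assms 1 2 by (intro floor_unique; auto)+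
    have c: "\<lceil>u+d\<rceil> = n+1" "\<lceil>v+d'\<rceil> = n+1" using b assms 1 2 by (intro ceiling_unique; auto)+
    have "u + d \<le> K \<longleftrightarrow> n + 1 \<le> K" using c ceiling_le_iff[of "u+d" "int K"] by simp
    moreover have "v + d' \<le> K \<longleftrightarrow> n + 1 \<le> K" using c ceiling_le_iff[of "v+d'" "int K"] by simp
    ultimately show ?thesis using f c unfolding simK_def by auto
  next
    case 1: 2
    then have 2: "v - n = 1 - d'" using assms(7) A by simp
    have "u + d = of_int (n+1)" "v + d' = of_int (n+1)" using 1 2 by simp_all
    then have "u + d = v + d'" by simp
    then show ?thesis by (simp add: simK_refl)
  next
    case 1: 3
    then have 2: "v - n > 1 - d'" using assms(6,7) A by auto
    have f: "\<lfloor>u+d\<rfloor> = n+1" "\<lfloor>v+d'\<rfloor> = n+1" using b assms 1 2 by (intro floor_unique; auto)+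
    have c: "\<lceil>u+d\<rceil> = n+2" "\<lceil>v+d'\<rceil> = n+2" using b assms 1 2 by (intro ceiling_unique; auto)+
    have "u + d \<le> K \<longleftrightarrow> n + 2 \<le> K" using c ceiling_le_iff[of "u+d" "int K"] by simp
    moreover have "v + d' \<le> K \<longleftrightarrow> n + 2 \<le> K" using c ceiling_le_iff[of "v+d'" "int K"] by simp
    ultimately show ?thesis using f c unfolding simK_def by auto
  qed
qed

lemma pair_shift:
  fixes A A' d :: real
  assumes "0 \<le> A" "A < 1" "0 \<le> A'" "A' < 1" "0 < d" "d < 1"
  shows "((if Z \<or> A = 1-d then 0 else if A < 1-d then A + d else A + d - 1) \<le>
          (if Z' \<or> A' = 1-d then 0 else if A' < 1-d then A' + d else A' + d - 1))
   \<longleftrightarrow> ((Z \<or> A = 1-d) \<or> (\<not>(Z' \<or> A' = 1-d) \<and> (((A < 1-d) = (A' < 1-d)) \<and> A \<le> A' \<or> \<not> A < 1-d \<and> A' < 1-d)))"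
  using assms by (smt (verit))

lemma fractK_shift_int: "fractK K (u + real m) = (if u + real m > real K then 0 else fractK K u)"
  by (auto simp: fractK_def)

lemma simK_shift_int:
  assumes "simK K u v"
  shows "simK K (u + real m) (v + real m) \<and> (u + real m > real K \<longleftrightarrow> v + real m > real K)"
proof (cases "u > real K \<and> v > real K")
  case True then show ?thesis by (simp add: simK_def)
next
  case False
  then have g: "u \<le> K" "v \<le> K" "\<lfloor>u\<rfloor> = \<lfloor>v\<rfloor>" "\<lceil>u\<rceil> = \<lceil>v\<rceil>"
    using assms(1) unfolding simK_def by auto
  have cc: "\<lceil>u + real m\<rceil> = \<lceil>u\<rceil> + int m" "\<lceil>v + real m\<rceil> = \<lceil>v\<rceil> + int m"
    using ceiling_add_of_int[of u "int m"] ceiling_add_of_int[of v "int m"] by simp_all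
  have ff: "\<lfloor>u + real m\<rfloor> = \<lfloor>u\<rfloor> + int m" "\<lfloor>v + real m\<rfloor> = \<lfloor>v\<rfloor> + int m"
    using floor_add_int[of u "int m"] floor_add_int[of v "int m"] by simp_all
  have e: "u + real m \<le> K \<longleftrightarrow> v + real m \<le> K"
    using g cc ceiling_le_iff[of "u+real m" "int K"] ceiling_le_iff[of "v+real m" "int K"] by simp
  have "\<lfloor>u + real m\<rfloor> = \<lfloor>v + real m\<rfloor>" "\<lceil>u + real m\<rceil> = \<lceil>v + real m\<rceil>" using g cc ff by simp_all
  then show ?thesis using e unfolding simK_def by auto
qed

lemma cvS_shift_int:
  assumes "cvS C K x y"
  shows "cvS C K (\<lambda>\<omega>. x \<omega> + real m) (\<lambda>\<omega>. y \<omega> + real m)"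
  unfolding cvS_def
proof (intro conjI ballI)
  fix \<omega> assume "\<omega> \<in> C"
  then show "simK K (x \<omega> + real m) (y \<omega> + real m)" using assms simK_shift_int unfolding cvS_def by blast
next
  fix \<omega> \<omega>' assume w: "\<omega> \<in> C" "\<omega>' \<in> C"
  have s: "simK K (x \<omega>) (y \<omega>)" "simK K (x \<omega>') (y \<omega>')" using assms w unfolding cvS_def by auto
  have o: "fractK K (x \<omega>) \<le> fractK K (x \<omega>') \<longleftrightarrow> fractK K (y \<omega>) \<le> fractK K (y \<omega>')"
    using assms w unfolding cvS_def by auto
  have z: "fractK K (x \<omega>) = 0 \<longleftrightarrow> fractK K (y \<omega>) = 0" using simK_fract0 s(1) by blast
  have Z: "x \<omega> + real m > K \<longleftrightarrow> y \<omega> + real m > K" "x \<omega>' + real m > K \<longleftrightarrow> y \<omega>' + real m > K"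
    using simK_shift_int s by blast+
  have g: "fractK K (x \<omega>) \<ge> 0" "fractK K (y \<omega>) \<ge> 0" "fractK K (x \<omega>') \<ge> 0" "fractK K (y \<omega>') \<ge> 0"
    by (simp_all add: fractK_ge0)
  show "fractK K (x \<omega> + real m) \<le> fractK K (x \<omega>' + real m) \<longleftrightarrow>
        fractK K (y \<omega> + real m) \<le> fractK K (y \<omega>' + real m)"
    unfolding fractK_shift_int using Z z o g by auto
qed




lemma cut_lemma:
  fixes A B :: "'w \<Rightarrow> real"
  assumes fin: "finite C" and ord: "\<forall>\<omega>\<in>C. \<forall>\<omega>'\<in>C. A \<omega> \<le> A \<omega>' \<longleftrightarrow> B \<omega> \<le> B \<omega>'"
   and z: "\<forall>\<omega>\<in>C. A \<omega> = 0 \<longleftrightarrow> B \<omega> = 0"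
   and rng: "\<forall>\<omega>\<in>C. 0 \<le> A \<omega> \<and> A \<omega> < 1 \<and> 0 \<le> B \<omega> \<and> B \<omega> < 1"
   and s: "0 < s" "s < 1"
  shows "\<exists>s'. 0 < s' \<and> s' < 1 \<and> (\<forall>\<omega>\<in>C. (A \<omega> < s \<longleftrightarrow> B \<omega> < s') \<and> (A \<omega> = s \<longleftrightarrow> B \<omega> = s'))"
proof (cases "\<exists>\<omega>0\<in>C. A \<omega>0 = s")
  case True
  then obtain \<omega>0 where w0: "\<omega>0 \<in> C" "A \<omega>0 = s" by blast
  show ?thesis
  proof (intro exI[of _ "B \<omega>0"] conjI ballI)
    have "B \<omega>0 \<noteq> 0" using z w0 s by auto
    then show "0 < B \<omega>0" using rng w0 by force
    show "B \<omega>0 < 1" using rng w0 by auto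
    fix \<omega> assume w: "\<omega> \<in> C"
    have o1: "A \<omega>0 \<le> A \<omega> \<longleftrightarrow> B \<omega>0 \<le> B \<omega>" "A \<omega> \<le> A \<omega>0 \<longleftrightarrow> B \<omega> \<le> B \<omega>0"
      using ord w w0 by auto
    show "A \<omega> < s \<longleftrightarrow> B \<omega> < B \<omega>0" using o1 w0 by auto
    show "A \<omega> = s \<longleftrightarrow> B \<omega> = B \<omega>0" using o1 w0 by auto
  qed
next
  case False
  define Lo where "Lo = insert 0 (B ` {\<omega>\<in>C. A \<omega> < s})"
  define Hi where "Hi = insert 1 (B ` {\<omega>\<in>C. A \<omega> > s})"
  have fL: "finite Lo" "finite Hi" using fin by (simp_all add: Lo_def Hi_def)
  have sep: "l < h" if l: "l \<in> Lo" and h: "h \<in> Hi" for l h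
  proof -
    have pos: "0 < B \<omega>'" if "\<omega>' \<in> C" "A \<omega>' > s" for \<omega>'
    proof -
      have "A \<omega>' \<noteq> 0" using that s by auto
      then have "B \<omega>' \<noteq> 0" using z that by auto
      then show ?thesis using rng that by force
    qed
    have lt: "B \<omega> < B \<omega>'" if "\<omega> \<in> C" "A \<omega> < s" "\<omega>' \<in> C" "A \<omega>' > s" for \<omega> \<omega>'
    proof -
      have "\<not> A \<omega>' \<le> A \<omega>" using that by auto
      then have "\<not> B \<omega>' \<le> B \<omega>" using ord that by auto
      then show ?thesis by auto
    qed
    show ?thesis using l h pos lt rng unfolding Lo_def Hi_def by auto
  qed
  have ne: "Lo \<noteq> {}" "Hi \<noteq> {}" by (auto simp: Lo_def Hi_def)
  have lo: "Max Lo \<in> Lo" "Min Hi \<in> Hi" using Max_in[OF fL(1) ne(1)] Min_in[OF fL(2) ne(2)] by auto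
  have lohi: "Max Lo < Min Hi" using sep lo by blast
  have lo0: "0 \<le> Max Lo" using fL by (auto simp: Lo_def intro: Max_ge)
  have hi1: "Min Hi \<le> 1" using fL by (auto simp: Hi_def intro: Min_le)
  have mid: "Max Lo < (Max Lo + Min Hi)/2" "(Max Lo + Min Hi)/2 < Min Hi" using lohi by (simp_all add: field_simps)
  show ?thesis
  proof (intro exI[of _ "(Max Lo + Min Hi)/2"] conjI ballI)
    show "0 < (Max Lo + Min Hi)/2" "(Max Lo + Min Hi)/2 < 1" using lohi lo0 hi1 by simp_all
    fix \<omega> assume w: "\<omega> \<in> C"
    have ns: "A \<omega> \<noteq> s" using False w by auto
    show "A \<omega> < s \<longleftrightarrow> B \<omega> < (Max Lo + Min Hi)/2"
    proof (cases "A \<omega> < s")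
      case True
      then have "B \<omega> \<in> Lo" using w by (auto simp: Lo_def)
      then have "B \<omega> \<le> Max Lo" using fL by (simp add: Max_ge)
      then have "B \<omega> < (Max Lo + Min Hi)/2" using mid by linarith
      then show ?thesis using True by simp
    next
      case False
      then have "A \<omega> > s" using ns by auto
      then have "B \<omega> \<in> Hi" using w by (auto simp: Hi_def)
      then have "Min Hi \<le> B \<omega>" using fL by (simp add: Min_le)
      then have "\<not> B \<omega> < (Max Lo + Min Hi)/2" using mid by linarith
      then show ?thesis using False by simp
    qed
    show "A \<omega> = s \<longleftrightarrow> B \<omega> = (Max Lo + Min Hi)/2"
    proof (cases "A \<omega> < s")
      case True
      then have "B \<omega> \<in> Lo" using w by (auto simp: Lo_def)
      then have "B \<omega> \<le> Max Lo" using fL by (simp add: Max_ge)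
      then have "B \<omega> \<noteq> (Max Lo + Min Hi)/2" using mid by linarith
      then show ?thesis using True by simp
    next
      case False
      then have "A \<omega> > s" using ns by auto
      then have "B \<omega> \<in> Hi" using w by (auto simp: Hi_def)
      then have "Min Hi \<le> B \<omega>" using fL by (simp add: Min_le)
      then have "B \<omega> \<noteq> (Max Lo + Min Hi)/2" using mid by linarith
      then show ?thesis using ns by simp
    qed
  qed
qed

lemma region_d:
  assumes fin: "finite C" and cv: "cvS C K x y" and d: "0 < d" "d < 1"
  shows "\<exists>d'. 0 < d' \<and> d' < 1 \<and> cvS C K (\<lambda>\<omega>. x \<omega> + d) (\<lambda>\<omega>. y \<omega> + d')"
proof -
  let ?A = "\<lambda>\<omega>. fractK K (x \<omega>)" and ?B = "\<lambda>\<omega>. fractK K (y \<omega>)"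
  have ord: "\<forall>\<omega>\<in>C. \<forall>\<omega>'\<in>C. ?A \<omega> \<le> ?A \<omega>' \<longleftrightarrow> ?B \<omega> \<le> ?B \<omega>'" using cv unfolding cvS_def by blast
  have sk: "\<forall>\<omega>\<in>C. simK K (x \<omega>) (y \<omega>)" using cv unfolding cvS_def by blast
  have z: "\<forall>\<omega>\<in>C. ?A \<omega> = 0 \<longleftrightarrow> ?B \<omega> = 0" using sk simK_fract0 by blast
  have rng: "\<forall>\<omega>\<in>C. 0 \<le> ?A \<omega> \<and> ?A \<omega> < 1 \<and> 0 \<le> ?B \<omega> \<and> ?B \<omega> < 1"
    by (simp add: fractK_ge0 fractK_lt1)
  obtain s' where s': "0 < s'" "s' < 1"
    "\<forall>\<omega>\<in>C. (?A \<omega> < 1-d \<longleftrightarrow> ?B \<omega> < s') \<and> (?A \<omega> = 1-d \<longleftrightarrow> ?B \<omega> = s')"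
    using cut_lemma[OF fin ord z rng, of "1-d"] d by auto
  define d' where "d' = 1 - s'"
  have d': "0 < d'" "d' < 1" using s' by (auto simp: d'_def)
  have e: "\<forall>\<omega>\<in>C. (?A \<omega> < 1-d \<longleftrightarrow> ?B \<omega> < 1-d') \<and> (?A \<omega> = 1-d \<longleftrightarrow> ?B \<omega> = 1-d')"
    using s'(3) by (simp add: d'_def)
  have per: "simK K (x \<omega> + d) (y \<omega> + d') \<and> (x \<omega> + d > real K \<longleftrightarrow> y \<omega> + d' > real K)" if "\<omega> \<in> C" for \<omega>
    using simK_shift[of K "x \<omega>" "y \<omega>" d d'] sk e that d d' by blast
  show ?thesis
  proof (intro exI[of _ d'] conjI d', unfold cvS_def, intro conjI ballI)
    fix \<omega> assume "\<omega> \<in> C" then show "simK K (x \<omega> + d) (y \<omega> + d')" using per by blast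
  next
    fix \<omega> \<omega>' assume w: "\<omega> \<in> C" "\<omega>' \<in> C"
    have E1: "(x \<omega> + d > real K) = (y \<omega> + d' > real K)" "(x \<omega>' + d > real K) = (y \<omega>' + d' > real K)"
      using per w by blast+
    have E2: "(?A \<omega> < 1-d) = (?B \<omega> < 1-d')" "(?A \<omega> = 1-d) = (?B \<omega> = 1-d')"
       "(?A \<omega>' < 1-d) = (?B \<omega>' < 1-d')" "(?A \<omega>' = 1-d) = (?B \<omega>' = 1-d')"
      using e w by blast+
    have E3: "(?A \<omega> \<le> ?A \<omega>') = (?B \<omega> \<le> ?B \<omega>')" using ord w by blast
    show "fractK K (x \<omega> + d) \<le> fractK K (x \<omega>' + d) \<longleftrightarrow> fractK K (y \<omega> + d') \<le> fractK K (y \<omega>' + d')"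
      unfolding fractK_shift[OF d] fractK_shift[OF d']
      unfolding pair_shift[OF fractK_ge0 fractK_lt1 fractK_ge0 fractK_lt1 d]
      unfolding pair_shift[OF fractK_ge0 fractK_lt1 fractK_ge0 fractK_lt1 d']
      unfolding E1 E2 E3 ..
  qed
qed

lemma region:
  assumes fin: "finite C" and cv: "cvS C K x y" and t: "0 \<le> t"
  shows "\<exists>\<tau>\<ge>0. cvS C K (\<lambda>\<omega>. x \<omega> + t) (\<lambda>\<omega>. y \<omega> + \<tau>)"
proof -
  define m where "m = nat \<lfloor>t\<rfloor>"
  define d where "d = t - real m"
  have md: "t = d + real m" "0 \<le> d" "d < 1" using t unfolding d_def m_def by linarith+
  show ?thesis
  proof (cases "d = 0")
    case True
    then have "cvS C K (\<lambda>\<omega>. x \<omega> + t) (\<lambda>\<omega>. y \<omega> + t)" using cvS_shift_int[OF cv, of m] md by simp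
    then show ?thesis using t by blast
  next
    case False
    then obtain d' where d': "0 < d'" "d' < 1" "cvS C K (\<lambda>\<omega>. x \<omega> + d) (\<lambda>\<omega>. y \<omega> + d')"
      using region_d[OF fin cv, of d] md by auto
    have "cvS C K (\<lambda>\<omega>. x \<omega> + d + real m) (\<lambda>\<omega>. y \<omega> + d' + real m)"
      using cvS_shift_int[OF d'(3), of m] by simp
    then have "cvS C K (\<lambda>\<omega>. x \<omega> + t) (\<lambda>\<omega>. y \<omega> + (d' + real m))"
      using md by (simp add: add.assoc)
    then show ?thesis using d' by (intro exI[of _ "d' + real m"]) auto
  qed
qed




lemma st_fst: "fst (st B (\<alpha>#\<sigma>)) r os = holds (fst (st B \<sigma>)) (snd (st B \<sigma>)) \<alpha> (nth os) (ssa_rel B r)"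
  by (simp add: Let_def)

lemma st_snd_wait: "snd (st B (Wait t#\<sigma>)) c os = snd (st B \<sigma>) c os + t"
  by (simp add: Let_def)

lemma st_snd_act: "snd (st B (Act A xs#\<sigma>)) c os =
   (if holds (fst (st B \<sigma>)) (snd (st B \<sigma>)) (Act A xs) (nth os) (reset_fm B c) then 0 else snd (st B \<sigma>) c os)"
  by (simp add: Let_def)

lemma gsit_Cons: "gsit B (\<alpha>#\<sigma>) \<longleftrightarrow> legal B \<alpha> \<and> gsit B \<sigma>"
  by (simp add: gsit_def)

lemma gsit_Nil: "gsit B []" by (simp add: gsit_def)

lemma exec_Cons: "exec B (\<alpha>#\<sigma>) \<longleftrightarrow> poss B \<alpha> \<sigma> \<and> exec B \<sigma>"
  by (auto simp: exec_def less_Suc_eq_0_disj)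

lemma exec_Nil: "exec B []" by (simp add: exec_def)

lemma st_nonneg: "gsit B \<sigma> \<Longrightarrow> 0 \<le> snd (st B \<sigma>) c os"
proof (induction \<sigma> arbitrary: c os)
  case Nil then show ?case by simp
next
  case (Cons \<alpha> \<sigma>)
  then have l: "legal B \<alpha>" and g: "gsit B \<sigma>" by (auto simp: gsit_Cons)
  show ?case
  proof (cases \<alpha>)
    case (Act A xs) then show ?thesis unfolding Act st_snd_act using Cons.IH[OF g] by simp
  next
    case (Wait t) then show ?thesis unfolding Wait st_snd_wait using Cons.IH[OF g] l Wait by simp
  qed
qed

lemma holds_cong:
  assumes "wf_fm B \<phi>" "\<forall>n\<in>nconsts \<phi>. n \<le> K"
    "\<forall>r os. length os = rel_ar B r \<longrightarrow> R r os = R' r os"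
    "\<forall>c os. length os = clk_ar B c \<longrightarrow> simK K (Cl c os) (Cl' c os)"
    "\<forall>A xs. (a = Act A xs) = (a' = Act A xs)"
  shows "holds R Cl a e \<phi> = holds R' Cl' a' e \<phi>"
  using assms
proof (induction \<phi> arbitrary: e)
  case (FClk c ts op n)
  then have "simK K (Cl c (map (tval e) ts)) (Cl' c (map (tval e) ts))" "n \<le> K" by auto
  then show ?case by (simp add: simK_cmpr)
qed auto

lemma finite_len: "finite {os::'o::finite list. length os = n}"
  using finite_lists_length_eq[of "UNIV::'o set" n] by simp

lemma finite_clk_terms: "finite (clk_terms (B :: ('o::finite, 'a, 'r::finite, 'c::finite) bat))"
proof -
  have "clk_terms B = (\<Union>c. Pair c ` {os. length os = clk_ar B c})"
    by (auto simp: clk_terms_def)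
  moreover have "finite (\<Union>c. Pair c ` {os::'o list. length os = clk_ar B c})"
    by (intro finite_UN_I finite_imageI finite_len finite_UNIV)
  ultimately show ?thesis by (metis (no_types, lifting))
qed

lemma finite_rel_terms: "finite {(r, os::'o list). length os = rel_ar (B :: ('o::finite, 'a, 'r::finite, 'c) bat) r}"
proof -
  have "{(r, os::'o list). length os = rel_ar B r} = (\<Union>r. Pair r ` {os::'o list. length os = rel_ar B r})"
    by auto
  moreover have "finite (\<Union>r. Pair r ` {os::'o list. length os = rel_ar B r})"
    by (intro finite_UN_I finite_imageI finite_len finite_UNIV)
  ultimately show ?thesis by (metis (no_types, lifting))
qed

lemma finite_act_part: "finite {Act A (os::'o list) | A os. length os = act_ar (B :: ('o::finite, 'a::finite, 'r, 'c) bat) A}"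
proof -
  have "{Act A (os::'o list) | A os. length os = act_ar B A} = (\<Union>A. Act A ` {os::'o list. length os = act_ar B A})"
    by auto
  moreover have "finite (\<Union>A. Act A ` {os::'o list. length os = act_ar B A})"
    by (intro finite_UN_I finite_imageI finite_len finite_UNIV)
  ultimately show ?thesis by (metis (no_types, lifting))
qed

lemma nu_nonneg: "gsit B \<sigma> \<Longrightarrow> \<forall>\<omega>\<in>clk_terms B. nu B \<sigma> \<omega> \<ge> 0"
  by (auto simp: nu_def st_nonneg)

lemma acts_props:
  fixes B :: "('o::finite, 'a::finite, 'r::finite, 'c::finite) bat"
  assumes "tsuccs_ok B ts" "gsit B \<sigma>"
  shows "finite (acts B K ts \<sigma>)" "\<forall>\<alpha>\<in>acts B K ts \<sigma>. legal B \<alpha>"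
proof -
  have t: "finite (ts (nu B \<sigma>) K) \<and> (\<forall>\<tau>\<in>ts (nu B \<sigma>) K. \<tau> \<ge> 0)"
    using assms nu_nonneg[OF assms(2)] unfolding tsuccs_ok_def by blast
  show "finite (acts B K ts \<sigma>)" using t finite_act_part[of B] by (simp add: acts_def)
  show "\<forall>\<alpha>\<in>acts B K ts \<sigma>. legal B \<alpha>" using t by (auto simp: acts_def)
qed

lemma approx_refl: "approx B K \<sigma> \<sigma>"
  by (simp add: approx_def cong_val_cvS cvS_refl)
lemma approx_sym: "approx B K \<sigma> \<sigma>' \<Longrightarrow> approx B K \<sigma>' \<sigma>"
  by (simp add: approx_def cong_val_cvS cvS_sym)
lemma approx_trans: "approx B K \<sigma> \<sigma>' \<Longrightarrow> approx B K \<sigma>' \<sigma>'' \<Longrightarrow> approx B K \<sigma> \<sigma>''"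
  unfolding approx_def cong_val_cvS using cvS_trans by metis

lemma cls_eq: "approx B K a b \<Longrightarrow> cls B K a = cls B K b"
  unfolding cls_def using approx_trans approx_sym by blast

lemma mem_cls: "gsit B \<sigma> \<Longrightarrow> \<sigma> \<in> cls B K \<sigma>"
  by (simp add: cls_def approx_refl)

lemma cls_eq_approx: "gsit B \<sigma>1 \<Longrightarrow> cls B K \<sigma>1 = cls B K \<sigma> \<Longrightarrow> approx B K \<sigma>1 \<sigma>"
  using mem_cls[of B \<sigma>1 K] by (simp add: cls_def)

lemma cvS_reset:
  assumes "cvS C K x y" "\<forall>\<omega>\<in>C. x' \<omega> = (if P \<omega> then 0 else x \<omega>) \<and> y' \<omega> = (if P \<omega> then 0 else y \<omega>)"
  shows "cvS C K x' y'"
  unfolding cvS_def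
proof (intro conjI ballI)
  fix \<omega> assume w: "\<omega> \<in> C"
  show "simK K (x' \<omega>) (y' \<omega>)" using assms w by (auto simp: cvS_def simK_refl)
next
  fix \<omega> \<omega>' assume w: "\<omega> \<in> C" "\<omega>' \<in> C"
  have s: "simK K (x \<omega>) (y \<omega>)" "simK K (x \<omega>') (y \<omega>')" using assms w unfolding cvS_def by auto
  have o: "fractK K (x \<omega>) \<le> fractK K (x \<omega>') \<longleftrightarrow> fractK K (y \<omega>) \<le> fractK K (y \<omega>')"
    using assms w unfolding cvS_def by auto
  have z: "fractK K (x \<omega>) = 0 \<longleftrightarrow> fractK K (y \<omega>) = 0" using simK_fract0 s(1) by blast
  have g: "fractK K (x \<omega>) \<ge> 0" "fractK K (y \<omega>) \<ge> 0" "fractK K (x \<omega>') \<ge> 0" "fractK K (y \<omega>') \<ge> 0"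
    by (simp_all add: fractK_ge0)
  have f0: "fractK K 0 = 0" by (simp add: fractK_def)
  show "fractK K (x' \<omega>) \<le> fractK K (x' \<omega>') \<longleftrightarrow> fractK K (y' \<omega>) \<le> fractK K (y' \<omega>')"
    using assms(2) w z o g f0 by (cases "P \<omega>"; cases "P \<omega>'") auto
qed

lemma bisim:
  fixes B :: "('o::finite, 'a::finite, 'r::finite, 'c::finite) bat"
  assumes cb: "clocked_bat B" and kb: "consts_bounded B K" and tso: "tsuccs_ok B ts"
    and g1: "gsit B \<sigma>1" and g: "gsit B \<sigma>" and ap: "approx B K \<sigma>1 \<sigma>"
    and l1: "legal B \<alpha>1" and p1: "poss B \<alpha>1 \<sigma>1"
  shows "\<exists>\<alpha>2\<in>acts B K ts \<sigma>. poss B \<alpha>2 \<sigma> \<and> approx B K (\<alpha>1#\<sigma>1) (\<alpha>2#\<sigma>)"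
proof -
  let ?R1 = "fst (st B \<sigma>1)" and ?C1 = "snd (st B \<sigma>1)" and ?R = "fst (st B \<sigma>)" and ?C = "snd (st B \<sigma>)"
  have hR: "\<forall>r os. length os = rel_ar B r \<longrightarrow> ?R1 r os = ?R r os" using ap by (simp add: approx_def)
  have cv: "cvS (clk_terms B) K (nu B \<sigma>1) (nu B \<sigma>)" using ap by (simp add: approx_def cong_val_cvS)
  have hC: "\<forall>c os. length os = clk_ar B c \<longrightarrow> simK K (?C1 c os) (?C c os)"
    using cv by (auto simp: cvS_def nu_def clk_terms_def)
  have wfs: "\<And>r. wf_fm B (ssa_rel B r)" "\<And>A. wf_fm B (poss_fm B A)" "\<And>c. wf_fm B (reset_fm B c)"
    using cb by (auto simp: clocked_bat_def)
  have kbs: "\<And>r. \<forall>n\<in>nconsts (ssa_rel B r). n \<le> K" "\<And>A. \<forall>n\<in>nconsts (poss_fm B A). n \<le> K"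
     "\<And>c. \<forall>n\<in>nconsts (reset_fm B c). n \<le> K"
    using kb by (auto simp: consts_bounded_def)
  have relpost: "\<forall>r os. length os = rel_ar B r \<longrightarrow> fst (st B (\<alpha>1#\<sigma>1)) r os = fst (st B (\<alpha>2#\<sigma>)) r os"
    if "\<forall>A xs. (\<alpha>1 = Act A xs) = (\<alpha>2 = Act A xs)" for \<alpha>2
    unfolding st_fst using holds_cong[OF wfs(1) kbs(1) hR hC that] by blast
  show ?thesis
  proof (cases \<alpha>1)
    case (Act A os)
    have inacts: "\<alpha>1 \<in> acts B K ts \<sigma>" using l1 Act by (auto simp: acts_def)
    have "poss B \<alpha>1 \<sigma>" using p1 Act holds_cong[OF wfs(2) kbs(2) hR hC, of "Act A os" "Act A os"] by simp
    moreover have "approx B K (\<alpha>1#\<sigma>1) (\<alpha>1#\<sigma>)"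
      unfolding approx_def cong_val_cvS
    proof
      show "\<forall>r os. length os = rel_ar B r \<longrightarrow> fst (st B (\<alpha>1#\<sigma>1)) r os = fst (st B (\<alpha>1#\<sigma>)) r os"
        using relpost by blast
      let ?P = "\<lambda>(c, xs). holds ?R ?C (Act A os) (nth xs) (reset_fm B c)"
      show "cvS (clk_terms B) K (nu B (\<alpha>1#\<sigma>1)) (nu B (\<alpha>1#\<sigma>))"
      proof (rule cvS_reset[OF cv, where P = ?P], intro ballI)
        fix \<omega> assume w: "\<omega> \<in> clk_terms B"
        obtain c xs where o: "\<omega> = (c, xs)" by (cases \<omega>)
        have "holds ?R1 ?C1 (Act A os) (nth xs) (reset_fm B c) = holds ?R ?C (Act A os) (nth xs) (reset_fm B c)"
          using holds_cong[OF wfs(3) kbs(3) hR hC] by blast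
        then show "nu B (\<alpha>1#\<sigma>1) \<omega> = (if ?P \<omega> then 0 else nu B \<sigma>1 \<omega>) \<and> nu B (\<alpha>1#\<sigma>) \<omega> = (if ?P \<omega> then 0 else nu B \<sigma> \<omega>)"
          using o Act by (simp del: st.simps add: nu_def st_snd_act)
      qed
    qed
    ultimately show ?thesis using inacts by blast
  next
    case (Wait t)
    have t: "t \<ge> 0" using l1 Wait by simp
    obtain \<tau> where \<tau>: "\<tau> \<ge> 0" "cvS (clk_terms B) K (\<lambda>\<omega>. nu B \<sigma>1 \<omega> + t) (\<lambda>\<omega>. nu B \<sigma> \<omega> + \<tau>)"
      using region[OF finite_clk_terms cv t] by blast
    obtain \<tau>' where \<tau>': "\<tau>' \<in> ts (nu B \<sigma>) K" "cvS (clk_terms B) K (\<lambda>\<omega>. nu B \<sigma> \<omega> + \<tau>) (\<lambda>\<omega>. nu B \<sigma> \<omega> + \<tau>')"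
      using tso nu_nonneg[OF g] \<tau>(1) unfolding tsuccs_ok_def cong_val_cvS by blast
    have nw: "\<And>s u. nu B (Wait u # s) = (\<lambda>\<omega>. nu B s \<omega> + u)"
      by (auto simp del: st.simps simp add: fun_eq_iff nu_def st_snd_wait)
    have "approx B K (\<alpha>1#\<sigma>1) (Wait \<tau>'#\<sigma>)"
      unfolding approx_def cong_val_cvS
    proof
      show "\<forall>r os. length os = rel_ar B r \<longrightarrow> fst (st B (\<alpha>1#\<sigma>1)) r os = fst (st B (Wait \<tau>'#\<sigma>)) r os"
        using relpost[of "Wait \<tau>'"] Wait by simp
      show "cvS (clk_terms B) K (nu B (\<alpha>1#\<sigma>1)) (nu B (Wait \<tau>'#\<sigma>))"
        unfolding Wait nw using cvS_trans[OF \<tau>(2) \<tau>'(2)] .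
    qed
    moreover have "Wait \<tau>' \<in> acts B K ts \<sigma>" using \<tau>'(1) by (simp add: acts_def)
    ultimately show ?thesis by force
  qed
qed




definition sig :: "('o, 'a, 'r, 'c) bat \<Rightarrow> nat \<Rightarrow> ('a, 'o) sit \<Rightarrow>
   ('r \<times> 'o list \<Rightarrow> bool) \<times> ('c \<times> 'o list \<Rightarrow> (int \<times> int) option) \<times> (('c \<times> 'o list) \<times> ('c \<times> 'o list) \<Rightarrow> bool)" where
  "sig B K \<sigma> = ((\<lambda>(r, os). if length os = rel_ar B r then fst (st B \<sigma>) r os else False),
     (\<lambda>\<omega>. if \<omega> \<in> clk_terms B then (if nu B \<sigma> \<omega> > real K then None else Some (\<lfloor>nu B \<sigma> \<omega>\<rfloor>, \<lceil>nu B \<sigma> \<omega>\<rceil>)) else None),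
     (\<lambda>(\<omega>, \<omega>'). if \<omega> \<in> clk_terms B \<and> \<omega>' \<in> clk_terms B then fractK K (nu B \<sigma> \<omega>) \<le> fractK K (nu B \<sigma> \<omega>') else False))"

lemma simK_congr: "(v > real K \<longleftrightarrow> v' > real K) \<Longrightarrow> (\<not> v > real K \<Longrightarrow> \<lfloor>v\<rfloor> = \<lfloor>v'\<rfloor> \<and> \<lceil>v\<rceil> = \<lceil>v'\<rceil>)
   \<Longrightarrow> simK K u v = simK K u v'"
  by (auto simp: simK_def)

lemma sig_approx:
  assumes "sig B K \<sigma> = sig B K \<sigma>'"
  shows "approx B K \<tau> \<sigma> = approx B K \<tau> \<sigma>'"
proof -
  have h1: "fst (st B \<sigma>) r os = fst (st B \<sigma>') r os" if "length os = rel_ar B r" for r os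
    using fun_cong[OF arg_cong[OF assms, of fst], of "(r, os)"] that by (simp add: sig_def)
  have h2: "simK K u (nu B \<sigma> \<omega>) = simK K u (nu B \<sigma>' \<omega>)" if "\<omega> \<in> clk_terms B" for \<omega> u
  proof -
    have e: "(if nu B \<sigma> \<omega> > real K then None else Some (\<lfloor>nu B \<sigma> \<omega>\<rfloor>, \<lceil>nu B \<sigma> \<omega>\<rceil>)) =
             (if nu B \<sigma>' \<omega> > real K then None else Some (\<lfloor>nu B \<sigma>' \<omega>\<rfloor>, \<lceil>nu B \<sigma>' \<omega>\<rceil>))"
      using fun_cong[OF arg_cong[OF assms, of "\<lambda>x. fst (snd x)"], of \<omega>] that by (simp add: sig_def)
    show ?thesis
      by (rule simK_congr) (use e in \<open>auto split: if_splits\<close>)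
  qed
  have h3: "(fractK K (nu B \<sigma> \<omega>) \<le> fractK K (nu B \<sigma> \<omega>')) = (fractK K (nu B \<sigma>' \<omega>) \<le> fractK K (nu B \<sigma>' \<omega>'))"
    if "\<omega> \<in> clk_terms B" "\<omega>' \<in> clk_terms B" for \<omega> \<omega>'
    using fun_cong[OF arg_cong[OF assms, of "\<lambda>x. snd (snd x)"], of "(\<omega>, \<omega>')"] that by (simp add: sig_def)
  show ?thesis unfolding approx_def cong_val_def using h1 h2 h3 by auto
qed

lemma sig_cls: "sig B K \<sigma> = sig B K \<sigma>' \<Longrightarrow> cls B K \<sigma> = cls B K \<sigma>'"
  unfolding cls_def using sig_approx by blast

lemma finite_sig:
  fixes B :: "('o::finite, 'a::finite, 'r::finite, 'c::finite) bat"
  shows "finite (sig B K ` {\<sigma>. gsit B \<sigma>})"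
proof -
  define D1 where "D1 = {(r, os::'o list). length os = rel_ar B r}"
  define C where "C = clk_terms B"
  define Rg where "Rg = insert None (Some ` ({0..int K} \<times> {0..int K}))"
  define S1 where "S1 = {f::'r \<times> 'o list \<Rightarrow> bool. \<forall>x. (x \<in> D1 \<longrightarrow> f x \<in> UNIV) \<and> (x \<notin> D1 \<longrightarrow> f x = False)}"
  define S2 where "S2 = {f::'c \<times> 'o list \<Rightarrow> (int \<times> int) option. \<forall>x. (x \<in> C \<longrightarrow> f x \<in> Rg) \<and> (x \<notin> C \<longrightarrow> f x = None)}"
  define S3 where "S3 = {f::('c \<times> 'o list) \<times> ('c \<times> 'o list) \<Rightarrow> bool. \<forall>x. (x \<in> C \<times> C \<longrightarrow> f x \<in> UNIV) \<and> (x \<notin> C \<times> C \<longrightarrow> f x = False)}"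
  have fC: "finite C" unfolding C_def by (rule finite_clk_terms)
  have f1: "finite S1" unfolding S1_def
    by (rule finite_set_of_finite_funs) (simp_all add: D1_def finite_rel_terms)
  have f2: "finite S2" unfolding S2_def
    by (rule finite_set_of_finite_funs) (simp_all add: fC Rg_def)
  have f3: "finite S3" unfolding S3_def
    by (rule finite_set_of_finite_funs) (simp_all add: fC)
  note f = f1 f2 f3
  have "sig B K ` {\<sigma>. gsit B \<sigma>} \<subseteq> S1 \<times> S2 \<times> S3"
  proof
    fix z assume "z \<in> sig B K ` {\<sigma>. gsit B \<sigma>}"
    then obtain \<sigma> where g: "gsit B \<sigma>" and z: "z = sig B K \<sigma>" by blast
    have nn: "\<And>\<omega>. 0 \<le> nu B \<sigma> \<omega>" using st_nonneg[OF g] by (simp add: nu_def split: prod.splits)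
    have r: "\<lfloor>nu B \<sigma> \<omega>\<rfloor> \<in> {0..int K} \<and> \<lceil>nu B \<sigma> \<omega>\<rceil> \<in> {0..int K}" if "\<not> nu B \<sigma> \<omega> > real K" for \<omega>
    proof -
      have a: "0 \<le> nu B \<sigma> \<omega>" "nu B \<sigma> \<omega> \<le> real K" using nn[of \<omega>] that by auto
      have "\<lceil>nu B \<sigma> \<omega>\<rceil> \<le> int K" using a(2) by (simp add: ceiling_le_iff)
      moreover have "0 \<le> \<lfloor>nu B \<sigma> \<omega>\<rfloor>" using a(1) by simp
      moreover have "\<lfloor>nu B \<sigma> \<omega>\<rfloor> \<le> \<lceil>nu B \<sigma> \<omega>\<rceil>" by (rule floor_le_ceiling)
      moreover have "0 \<le> \<lceil>nu B \<sigma> \<omega>\<rceil>" using a(1) by simp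
      ultimately have "\<lfloor>nu B \<sigma> \<omega>\<rfloor> \<le> int K" "0 \<le> \<lfloor>nu B \<sigma> \<omega>\<rfloor>" "0 \<le> \<lceil>nu B \<sigma> \<omega>\<rceil>" "\<lceil>nu B \<sigma> \<omega>\<rceil> \<le> int K"
        by linarith+
      then show ?thesis by simp
    qed
    have a1: "fst (sig B K \<sigma>) \<in> S1"
      unfolding S1_def
    proof (intro CollectI allI conjI impI)
      fix x :: "'r \<times> 'o list" assume "x \<notin> D1"
      then show "fst (sig B K \<sigma>) x = False" by (cases x) (simp add: sig_def D1_def)
    qed simp
    have a2: "fst (snd (sig B K \<sigma>)) \<in> S2"
      unfolding S2_def
    proof (intro CollectI allI conjI impI)
      fix x :: "'c \<times> 'o list" assume "x \<notin> C"
      then show "fst (snd (sig B K \<sigma>)) x = None" by (simp add: sig_def C_def)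
    next
      fix x :: "'c \<times> 'o list" assume x: "x \<in> C"
      show "fst (snd (sig B K \<sigma>)) x \<in> Rg"
      proof (cases "nu B \<sigma> x > real K")
        case True then show ?thesis using x by (simp add: sig_def C_def Rg_def)
      next
        case False
        then have "(\<lfloor>nu B \<sigma> x\<rfloor>, \<lceil>nu B \<sigma> x\<rceil>) \<in> {0..int K} \<times> {0..int K}" using r[of x] by blast
        then show ?thesis using x False unfolding Rg_def by (simp add: sig_def C_def)
      qed
    qed
    have a3: "snd (snd (sig B K \<sigma>)) \<in> S3"
      unfolding S3_def
    proof (intro CollectI allI conjI impI)
      fix x :: "('c \<times> 'o list) \<times> ('c \<times> 'o list)" assume "x \<notin> C \<times> C"
      then show "snd (snd (sig B K \<sigma>)) x = False" by (cases x) (auto simp: sig_def C_def)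
    qed simp
    show "z \<in> S1 \<times> S2 \<times> S3" using a1 a2 a3 unfolding z by (simp add: mem_Times_iff)
  qed
  moreover have "finite (S1 \<times> S2 \<times> S3)" using f by simp
  ultimately show ?thesis by (rule finite_subset)
qed

lemma finite_Cls:
  fixes B :: "('o::finite, 'a::finite, 'r::finite, 'c::finite) bat"
  shows "finite (cls B K ` {\<sigma>. gsit B \<sigma>})"
proof -
  let ?G = "{\<sigma>. gsit B \<sigma>}"
  let ?F = "\<lambda>z. cls B K (SOME \<sigma>. \<sigma> \<in> ?G \<and> sig B K \<sigma> = z)"
  have "cls B K ` ?G \<subseteq> ?F ` (sig B K ` ?G)"
  proof
    fix X assume "X \<in> cls B K ` ?G"
    then obtain \<sigma> where s: "\<sigma> \<in> ?G" "X = cls B K \<sigma>" by blast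
    have "(SOME \<sigma>'. \<sigma>' \<in> ?G \<and> sig B K \<sigma>' = sig B K \<sigma>) \<in> ?G \<and> sig B K (SOME \<sigma>'. \<sigma>' \<in> ?G \<and> sig B K \<sigma>' = sig B K \<sigma>) = sig B K \<sigma>"
      by (rule someI[of _ \<sigma>]) (use s in auto)
    then have "sig B K (SOME \<sigma>'. \<sigma>' \<in> ?G \<and> sig B K \<sigma>' = sig B K \<sigma>) = sig B K \<sigma>" by blast
    then have "?F (sig B K \<sigma>) = cls B K \<sigma>" by (rule sig_cls)
    then have "X = ?F (sig B K \<sigma>)" using s by simp
    then show "X \<in> ?F ` (sig B K ` ?G)" using s(1) by blast
  qed
  then show ?thesis using finite_sig[of B K] finite_subset by blast
qed




definition dn where
  "dn B K ts E \<sigma> \<longleftrightarrow> (\<forall>\<alpha>\<in>acts B K ts \<sigma>. poss B \<alpha> \<sigma> \<longrightarrow> (cls B K \<sigma>, cls B K (\<alpha>#\<sigma>)) \<in> E)"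

definition inv4 where
  "inv4 B K ts Op V E cur \<longleftrightarrow>
   finite Op \<and> (\<forall>\<sigma>\<in>Op. gsit B \<sigma> \<and> exec B \<sigma>)
 \<and> (\<forall>\<sigma> As. cur = Some (\<sigma>, As) \<longrightarrow> gsit B \<sigma> \<and> exec B \<sigma> \<and> As \<subseteq> acts B K ts \<sigma> \<and>
      (\<forall>\<alpha>\<in>acts B K ts \<sigma> - As. poss B \<alpha> \<sigma> \<longrightarrow> (cls B K \<sigma>, cls B K (\<alpha>#\<sigma>)) \<in> E))
 \<and> (\<forall>X\<in>V. \<exists>\<sigma>. gsit B \<sigma> \<and> exec B \<sigma> \<and> cls B K \<sigma> = X \<and>
      (\<sigma> \<in> Op \<or> (\<exists>As. cur = Some (\<sigma>, As)) \<or> dn B K ts E \<sigma>))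
 \<and> (\<forall>X Y. (X, Y) \<in> E \<longrightarrow> td_trans B K X Y \<and> Y \<in> V) \<and> cls B K [] \<in> V"

definition alg_inv where
  "alg_inv B K ts s = (case s of (Op, V, E, cur) \<Rightarrow> inv4 B K ts Op V E cur)"

lemma inv_init: "alg_inv B K ts (alg_init B K)"
  by (auto simp: alg_inv_def inv4_def alg_init_def gsit_Nil exec_Nil intro!: exI[of _ "[]"])

lemma inv4I:
  "finite Op \<Longrightarrow> (\<And>\<sigma>. \<sigma>\<in>Op \<Longrightarrow> gsit B \<sigma> \<and> exec B \<sigma>) \<Longrightarrow>
   (\<And>\<sigma> As. cur = Some (\<sigma>, As) \<Longrightarrow> gsit B \<sigma> \<and> exec B \<sigma> \<and> As \<subseteq> acts B K ts \<sigma> \<and>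
      (\<forall>\<alpha>\<in>acts B K ts \<sigma> - As. poss B \<alpha> \<sigma> \<longrightarrow> (cls B K \<sigma>, cls B K (\<alpha>#\<sigma>)) \<in> E)) \<Longrightarrow>
   (\<And>X. X\<in>V \<Longrightarrow> \<exists>\<sigma>. gsit B \<sigma> \<and> exec B \<sigma> \<and> cls B K \<sigma> = X \<and>
      (\<sigma> \<in> Op \<or> (\<exists>As. cur = Some (\<sigma>, As)) \<or> dn B K ts E \<sigma>)) \<Longrightarrow>
   (\<And>X Y. (X, Y) \<in> E \<Longrightarrow> td_trans B K X Y \<and> Y \<in> V) \<Longrightarrow> cls B K [] \<in> V \<Longrightarrow>
   inv4 B K ts Op V E cur"
  unfolding inv4_def by blast

lemma inv4D_V: "inv4 B K ts Op V E cur \<Longrightarrow> X \<in> V \<Longrightarrow> \<exists>\<sigma>. gsit B \<sigma> \<and> exec B \<sigma> \<and> cls B K \<sigma> = X \<and>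
      (\<sigma> \<in> Op \<or> (\<exists>As. cur = Some (\<sigma>, As)) \<or> dn B K ts E \<sigma>)"
  unfolding inv4_def by blast

lemma dn_mono: "dn B K ts E \<sigma> \<Longrightarrow> E \<subseteq> E' \<Longrightarrow> dn B K ts E' \<sigma>"
  unfolding dn_def by blast

lemma inv_step:
  fixes B :: "('o::finite, 'a::finite, 'r::finite, 'c::finite) bat"
  assumes st: "alg_step B K ts s s'" and I: "alg_inv B K ts s" and tso: "tsuccs_ok B ts"
  shows "alg_inv B K ts s'"
  using st
proof cases
  case (pick \<sigma> Op V E)
  have I4: "inv4 B K ts Op V E None" using I pick by (simp add: alg_inv_def)
  have s: "\<sigma> \<in> Op" by fact
  show ?thesis unfolding pick(2) alg_inv_def case_prod_conv
  proof (rule inv4I)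
    show "finite (Op - {\<sigma>})" using I4 by (simp add: inv4_def)
  next
    fix x assume "x \<in> Op - {\<sigma>}" then show "gsit B x \<and> exec B x" using I4 by (simp add: inv4_def)
  next
    fix x As assume "Some (\<sigma>, acts B K ts \<sigma>) = Some (x, As)"
    then show "gsit B x \<and> exec B x \<and> As \<subseteq> acts B K ts x \<and>
      (\<forall>\<alpha>\<in>acts B K ts x - As. poss B \<alpha> x \<longrightarrow> (cls B K x, cls B K (\<alpha>#x)) \<in> E)"
      using I4 s by (auto simp: inv4_def)
  next
    fix X assume X: "X \<in> V"
    then obtain \<sigma>' where r: "gsit B \<sigma>'" "exec B \<sigma>'" "cls B K \<sigma>' = X"
      "\<sigma>' \<in> Op \<or> dn B K ts E \<sigma>'" using inv4D_V[OF I4] by fastforce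
    then show "\<exists>\<sigma>''. gsit B \<sigma>'' \<and> exec B \<sigma>'' \<and> cls B K \<sigma>'' = X \<and>
      (\<sigma>'' \<in> Op - {\<sigma>} \<or> (\<exists>As. Some (\<sigma>, acts B K ts \<sigma>) = Some (\<sigma>'', As)) \<or> dn B K ts E \<sigma>'')"
      by (intro exI[of _ \<sigma>']) auto
  next
    fix X Y assume "(X, Y) \<in> E" then show "td_trans B K X Y \<and> Y \<in> V" using I4 by (simp add: inv4_def)
  next
    show "cls B K [] \<in> V" using I4 by (simp add: inv4_def)
  qed
next
  case (act_poss \<alpha> As \<sigma> Op V E)
  have I4: "inv4 B K ts Op V E (Some (\<sigma>, As))" using I act_poss by (simp add: alg_inv_def)
  have cur: "gsit B \<sigma>" "exec B \<sigma>" "As \<subseteq> acts B K ts \<sigma>"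
    "\<forall>\<alpha>\<in>acts B K ts \<sigma> - As. poss B \<alpha> \<sigma> \<longrightarrow> (cls B K \<sigma>, cls B K (\<alpha>#\<sigma>)) \<in> E"
    using I4 unfolding inv4_def by blast+
  have a: "\<alpha> \<in> As" "poss B \<alpha> \<sigma>" by fact+
  have ga: "gsit B (\<alpha>#\<sigma>)" using acts_props(2)[OF tso cur(1)] cur(3) a(1) gsit_Cons cur(1) by blast
  have ea: "exec B (\<alpha>#\<sigma>)" using exec_Cons cur(2) a(2) by blast
  have td: "td_trans B K (cls B K \<sigma>) (cls B K (\<alpha>#\<sigma>))" unfolding td_trans_def using ga ea by blast
  define y where "y = cls B K (\<alpha>#\<sigma>)"
  define Op' where "Op' = (if y \<notin> V then Op \<union> {\<alpha>#\<sigma>} else Op)"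
  have OpOp: "Op \<subseteq> Op'" unfolding Op'_def by auto
  show ?thesis unfolding act_poss(2) alg_inv_def case_prod_conv y_def[symmetric] Op'_def[symmetric]
  proof (rule inv4I)
    show "finite Op'" using I4 by (simp add: inv4_def Op'_def)
  next
    fix x assume "x \<in> Op'" then show "gsit B x \<and> exec B x" using I4 ga ea
      by (auto simp: inv4_def Op'_def split: if_splits)
  next
    fix x Bs assume "Some (\<sigma>, As - {\<alpha>}) = Some (x, Bs)"
    then have x: "x = \<sigma>" "Bs = As - {\<alpha>}" by auto
    show "gsit B x \<and> exec B x \<and> Bs \<subseteq> acts B K ts x \<and>
      (\<forall>\<beta>\<in>acts B K ts x - Bs. poss B \<beta> x \<longrightarrow> (cls B K x, cls B K (\<beta>#x)) \<in> E \<union> {(cls B K \<sigma>, y)})"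
      using cur x by (auto simp: y_def)
  next
    fix X assume X: "X \<in> V \<union> {y}"
    show "\<exists>\<sigma>''. gsit B \<sigma>'' \<and> exec B \<sigma>'' \<and> cls B K \<sigma>'' = X \<and>
      (\<sigma>'' \<in> Op' \<or> (\<exists>Bs. Some (\<sigma>, As - {\<alpha>}) = Some (\<sigma>'', Bs)) \<or> dn B K ts (E \<union> {(cls B K \<sigma>, y)}) \<sigma>'')"
    proof (cases "X \<in> V")
      case True
      then obtain \<sigma>' where r: "gsit B \<sigma>'" "exec B \<sigma>'" "cls B K \<sigma>' = X"
        "\<sigma>' \<in> Op \<or> (\<exists>As'. Some (\<sigma>, As) = Some (\<sigma>', As')) \<or> dn B K ts E \<sigma>'" using inv4D_V[OF I4] by blast
      have "\<sigma>' \<in> Op' \<or> (\<exists>Bs. Some (\<sigma>, As - {\<alpha>}) = Some (\<sigma>', Bs)) \<or> dn B K ts (E \<union> {(cls B K \<sigma>, y)}) \<sigma>'"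
        using r(4) OpOp dn_mono[of B K ts E \<sigma>' "E \<union> {(cls B K \<sigma>, y)}"] by auto
      then show ?thesis using r by blast
    next
      case False
      then have "X = y" "y \<notin> V" using X by auto
      then show ?thesis using ga ea by (intro exI[of _ "\<alpha>#\<sigma>"]) (auto simp: Op'_def y_def)
    qed
  next
    fix X Y assume "(X, Y) \<in> E \<union> {(cls B K \<sigma>, y)}"
    then show "td_trans B K X Y \<and> Y \<in> V \<union> {y}" using I4 td by (auto simp: inv4_def y_def)
  next
    show "cls B K [] \<in> V \<union> {y}" using I4 by (simp add: inv4_def)
  qed
next
  case (act_not_poss \<alpha> As \<sigma> Op V E)
  have I4: "inv4 B K ts Op V E (Some (\<sigma>, As))" using I act_not_poss by (simp add: alg_inv_def)
  have np: "\<not> poss B \<alpha> \<sigma>" by fact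
  show ?thesis unfolding act_not_poss(2) alg_inv_def case_prod_conv
  proof (rule inv4I)
    show "finite Op" using I4 by (simp add: inv4_def)
  next
    fix x assume "x \<in> Op" then show "gsit B x \<and> exec B x" using I4 by (simp add: inv4_def)
  next
    fix x Bs assume "Some (\<sigma>, As - {\<alpha>}) = Some (x, Bs)"
    then have x: "x = \<sigma>" "Bs = As - {\<alpha>}" by auto
    have cur: "gsit B \<sigma>" "exec B \<sigma>" "As \<subseteq> acts B K ts \<sigma>"
      "\<forall>\<alpha>\<in>acts B K ts \<sigma> - As. poss B \<alpha> \<sigma> \<longrightarrow> (cls B K \<sigma>, cls B K (\<alpha>#\<sigma>)) \<in> E"
      using I4 unfolding inv4_def by blast+
    show "gsit B x \<and> exec B x \<and> Bs \<subseteq> acts B K ts x \<and>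
      (\<forall>\<beta>\<in>acts B K ts x - Bs. poss B \<beta> x \<longrightarrow> (cls B K x, cls B K (\<beta>#x)) \<in> E)"
      using cur x np by auto
  next
    fix X assume X: "X \<in> V"
    then obtain \<sigma>' where r: "gsit B \<sigma>'" "exec B \<sigma>'" "cls B K \<sigma>' = X"
        "\<sigma>' \<in> Op \<or> (\<exists>As'. Some (\<sigma>, As) = Some (\<sigma>', As')) \<or> dn B K ts E \<sigma>'" using inv4D_V[OF I4] by fastforce
    then show "\<exists>\<sigma>''. gsit B \<sigma>'' \<and> exec B \<sigma>'' \<and> cls B K \<sigma>'' = X \<and>
      (\<sigma>'' \<in> Op \<or> (\<exists>Bs. Some (\<sigma>, As - {\<alpha>}) = Some (\<sigma>'', Bs)) \<or> dn B K ts E \<sigma>'')"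
      by (intro exI[of _ \<sigma>']) auto
  next
    fix X Y assume "(X, Y) \<in> E" then show "td_trans B K X Y \<and> Y \<in> V" using I4 by (simp add: inv4_def)
  next
    show "cls B K [] \<in> V" using I4 by (simp add: inv4_def)
  qed
next
  case (loop_done Op V E \<sigma>)
  have I4: "inv4 B K ts Op V E (Some (\<sigma>, {}))" using I loop_done by (simp add: alg_inv_def)
  have cur: "\<forall>\<alpha>\<in>acts B K ts \<sigma>. poss B \<alpha> \<sigma> \<longrightarrow> (cls B K \<sigma>, cls B K (\<alpha>#\<sigma>)) \<in> E"
    using I4 unfolding inv4_def by auto
  then have dsig: "dn B K ts E \<sigma>" by (simp add: dn_def)
  show ?thesis unfolding loop_done(2) alg_inv_def case_prod_conv
  proof (rule inv4I)
    show "finite Op" using I4 by (simp add: inv4_def)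
  next
    fix x assume "x \<in> Op" then show "gsit B x \<and> exec B x" using I4 by (simp add: inv4_def)
  next
    fix x Bs assume "(None :: (('a, 'o) sit \<times> ('a, 'o) gact set) option) = Some (x, Bs)"
    then show "gsit B x \<and> exec B x \<and> Bs \<subseteq> acts B K ts x \<and>
      (\<forall>\<beta>\<in>acts B K ts x - Bs. poss B \<beta> x \<longrightarrow> (cls B K x, cls B K (\<beta>#x)) \<in> E)" by simp
  next
    fix X assume X: "X \<in> V"
    then obtain \<sigma>' where r: "gsit B \<sigma>'" "exec B \<sigma>'" "cls B K \<sigma>' = X"
        "\<sigma>' \<in> Op \<or> (\<exists>As'. Some (\<sigma>, {}) = Some (\<sigma>', As')) \<or> dn B K ts E \<sigma>'" using inv4D_V[OF I4] by fastforce
    then show "\<exists>\<sigma>''. gsit B \<sigma>'' \<and> exec B \<sigma>'' \<and> cls B K \<sigma>'' = X \<and>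
      (\<sigma>'' \<in> Op \<or> (\<exists>Bs. (None :: (('a, 'o) sit \<times> ('a, 'o) gact set) option) = Some (\<sigma>'', Bs)) \<or> dn B K ts E \<sigma>'')"
      using dsig by (intro exI[of _ \<sigma>']) auto
  next
    fix X Y assume "(X, Y) \<in> E" then show "td_trans B K X Y \<and> Y \<in> V" using I4 by (simp add: inv4_def)
  next
    show "cls B K [] \<in> V" using I4 by (simp add: inv4_def)
  qed
qed




definition mu where
  "mu B K s = (case s of (Op, V, E, cur) \<Rightarrow>
     (card (cls B K ` {\<sigma>. gsit B \<sigma>} - V), card Op, case cur of None \<Rightarrow> 0 | Some (\<sigma>, As) \<Rightarrow> Suc (card As)))"

lemma inv4_V_sub: "inv4 B K ts Op V E cur \<Longrightarrow> V \<subseteq> cls B K ` {\<sigma>. gsit B \<sigma>}"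
  using inv4D_V by blast

lemma step_dec:
  fixes B :: "('o::finite, 'a::finite, 'r::finite, 'c::finite) bat"
  assumes st: "alg_step B K ts s s'" and I: "alg_inv B K ts s" and tso: "tsuccs_ok B ts"
  shows "(mu B K s', mu B K s) \<in> less_than <*lex*> less_than <*lex*> less_than"
  using st
proof cases
  case (pick \<sigma> Op V E)
  have I4: "inv4 B K ts Op V E None" using I pick by (simp add: alg_inv_def)
  have "finite Op" using I4 by (simp add: inv4_def)
  then have "card (Op - {\<sigma>}) < card Op" using pick(3) by (rule card_Diff1_less)
  then show ?thesis using pick by (simp add: mu_def)
next
  case (act_poss \<alpha> As \<sigma> Op V E)
  have I4: "inv4 B K ts Op V E (Some (\<sigma>, As))" using I act_poss by (simp add: alg_inv_def)
  have cur: "gsit B \<sigma>" "As \<subseteq> acts B K ts \<sigma>" using I4 unfolding inv4_def by blast+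
  have fA: "finite As" using acts_props(1)[OF tso cur(1)] cur(2) finite_subset by blast
  have ga: "gsit B (\<alpha>#\<sigma>)" using acts_props(2)[OF tso cur(1)] cur act_poss(3) gsit_Cons by blast
  let ?Cl = "cls B K ` {\<sigma>. gsit B \<sigma>}"
  have fC: "finite (?Cl - V)" using finite_Cls[of B K] by simp
  show ?thesis
  proof (cases "cls B K (\<alpha>#\<sigma>) \<in> V")
    case True
    have "card (As - {\<alpha>}) < card As" using fA act_poss(3) by (rule card_Diff1_less)
    moreover have "V \<union> {cls B K (\<alpha>#\<sigma>)} = V" using True by auto
    ultimately show ?thesis using act_poss True by (simp add: mu_def)
  next
    case False
    have y: "cls B K (\<alpha>#\<sigma>) \<in> ?Cl - V" using ga False by auto
    have "?Cl - (V \<union> {cls B K (\<alpha>#\<sigma>)}) = (?Cl - V) - {cls B K (\<alpha>#\<sigma>)}" by auto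
    moreover have "card ((?Cl - V) - {cls B K (\<alpha>#\<sigma>)}) < card (?Cl - V)" using fC y by (rule card_Diff1_less)
    ultimately show ?thesis using act_poss False by (simp add: mu_def)
  qed
next
  case (act_not_poss \<alpha> As \<sigma> Op V E)
  have I4: "inv4 B K ts Op V E (Some (\<sigma>, As))" using I act_not_poss by (simp add: alg_inv_def)
  have cur: "gsit B \<sigma>" "As \<subseteq> acts B K ts \<sigma>" using I4 unfolding inv4_def by blast+
  have fA: "finite As" using acts_props(1)[OF tso cur(1)] cur(2) finite_subset by blast
  have "card (As - {\<alpha>}) < card As" using fA act_not_poss(3) by (rule card_Diff1_less)
  then show ?thesis using act_not_poss by (simp add: mu_def)
next
  case (loop_done Op V E \<sigma>)
  then show ?thesis by (simp add: mu_def)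
qed

lemma reach_inv:
  fixes B :: "('o::finite, 'a::finite, 'r::finite, 'c::finite) bat"
  assumes "(alg_step B K ts)\<^sup>*\<^sup>* (alg_init B K) s" "tsuccs_ok B ts"
  shows "alg_inv B K ts s"
  using assms(1)
proof induction
  case base then show ?case by (rule inv_init)
next
  case (step y z) then show ?case using inv_step assms(2) by blast
qed

lemma path_back:
  fixes B :: "('o::finite, 'a::finite, 'r::finite, 'c::finite) bat"
  assumes cb: "clocked_bat B" and kb: "consts_bounded B K" and tso: "tsuccs_ok B ts"
    and I4: "inv4 B K ts {} V E None"
  shows "X \<in> V \<Longrightarrow> successively (td_trans B K) (X # q) \<Longrightarrow> successively (\<lambda>X Y. (X, Y) \<in> E) (X # q)"
proof (induction q arbitrary: X)
  case Nil then show ?case by simp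
next
  case (Cons Y q)
  have td: "td_trans B K X Y" and rest: "successively (td_trans B K) (Y # q)" using Cons.prems by auto
  obtain \<sigma> where r: "gsit B \<sigma>" "cls B K \<sigma> = X" "dn B K ts E \<sigma>"
    using inv4D_V[OF I4 Cons.prems(1)] by auto
  obtain \<sigma>1 \<alpha>1 where t: "gsit B (\<alpha>1#\<sigma>1)" "exec B (\<alpha>1#\<sigma>1)" "X = cls B K \<sigma>1" "Y = cls B K (\<alpha>1#\<sigma>1)"
    using td unfolding td_trans_def by blast
  have g1: "gsit B \<sigma>1" "legal B \<alpha>1" using t(1) gsit_Cons by blast+
  have p1: "poss B \<alpha>1 \<sigma>1" using t(2) exec_Cons by blast
  have ap: "approx B K \<sigma>1 \<sigma>" using cls_eq_approx[OF g1(1)] t(3) r(2) by simp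
  obtain \<alpha>2 where a2: "\<alpha>2 \<in> acts B K ts \<sigma>" "poss B \<alpha>2 \<sigma>" "approx B K (\<alpha>1#\<sigma>1) (\<alpha>2#\<sigma>)"
    using bisim[OF cb kb tso g1(1) r(1) ap g1(2) p1] by blast
  have "(cls B K \<sigma>, cls B K (\<alpha>2#\<sigma>)) \<in> E" using r(3) a2 unfolding dn_def by blast
  moreover have "cls B K (\<alpha>2#\<sigma>) = Y" using cls_eq[OF a2(3)] t(4) by simp
  ultimately have e: "(X, Y) \<in> E" using r(2) by simp
  then have "Y \<in> V" using I4 unfolding inv4_def by blast
  then have "successively (\<lambda>X Y. (X, Y) \<in> E) (Y # q)" using Cons.IH rest by blast
  then show ?case using e by simp
qed

theorem lemma6:
  fixes B :: "('o::finite, 'a::finite, 'r::finite, 'c::finite) bat"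
    and K :: nat
    and ts :: "('c \<times> 'o list \<Rightarrow> real) \<Rightarrow> nat \<Rightarrow> real set"
  assumes "clocked_bat B"
    and "consts_bounded B K"
    and "tsuccs_ok B ts"
  shows "(\<nexists>f. f 0 = alg_init B K \<and> (\<forall>n. alg_step B K ts (f n) (f (Suc n))))
       \<and> (\<forall>s. (alg_step B K ts)\<^sup>*\<^sup>* (alg_init B K) s \<and> alg_final s \<longrightarrow>
              (\<forall>p. p \<noteq> [] \<and> hd p = cls B K [] \<longrightarrow>
                 (successively (\<lambda>X Y. (X, Y) \<in> alg_edges s) p
                  \<longleftrightarrow> successively (td_trans B K) p)))"
proof (intro conjI allI impI)
  show "\<nexists>f. f 0 = alg_init B K \<and> (\<forall>n. alg_step B K ts (f n) (f (Suc n)))"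
  proof
    assume "\<exists>f. f 0 = alg_init B K \<and> (\<forall>n. alg_step B K ts (f n) (f (Suc n)))"
    then obtain f where f0: "f 0 = alg_init B K" and fs: "\<forall>n. alg_step B K ts (f n) (f (Suc n))" by blast
    have iv: "alg_inv B K ts (f n)" for n
    proof (induction n)
      case 0 then show ?case using f0 inv_init by simp
    next
      case (Suc n) then show ?case using inv_step fs assms(3) by blast
    qed
    let ?R = "less_than <*lex*> less_than <*lex*> less_than"
    have "wf ?R" by (intro wf_lex_prod wf_less_than)
    moreover have "\<forall>i. ((mu B K \<circ> f) (Suc i), (mu B K \<circ> f) i) \<in> ?R"
      using step_dec[OF spec[OF fs] iv assms(3)] by simp
    ultimately show False unfolding wf_iff_no_infinite_down_chain by blast
  qed
next
  fix s p
  assume s: "(alg_step B K ts)\<^sup>*\<^sup>* (alg_init B K) s \<and> alg_final s"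
    and p: "p \<noteq> [] \<and> hd p = cls B K []"
  obtain Op V E cur where sd: "s = (Op, V, E, cur)" by (cases s)
  have fin: "Op = {}" "cur = None" using s sd by (auto simp: alg_final_def)
  have I4: "inv4 B K ts {} V E None" using reach_inv[of B K ts s] s assms(3) sd fin by (simp add: alg_inv_def)
  have ed: "alg_edges s = E" using sd by (simp add: alg_edges_def)
  obtain q where pq: "p = cls B K [] # q" using p by (cases p) auto
  have V0: "cls B K [] \<in> V" using I4 by (simp add: inv4_def)
  show "successively (\<lambda>X Y. (X, Y) \<in> alg_edges s) p \<longleftrightarrow> successively (td_trans B K) p"
  proof
    assume "successively (\<lambda>X Y. (X, Y) \<in> alg_edges s) p"
    then show "successively (td_trans B K) p"
      by (rule successively_mono) (use I4 ed in \<open>auto simp: inv4_def\<close>)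
  next
    assume "successively (td_trans B K) p"
    then show "successively (\<lambda>X Y. (X, Y) \<in> alg_edges s) p"
      using path_back[OF assms I4 V0] pq ed by simp
  qed
qed


end
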